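(* Let $p\in(\tfrac12,1)$, $n\ge1$, $B\in\{1,\dots,n\}$. For $\lambda\in[0,1]$ let $\sigma^\lambda$ be the symmetric strategy profile of the crowdfunding game $\Gamma(B,n)$ in which every player plays action $1$ with probability $1$ after signal $H$ and with probability $\lambda$ after signal $L$. For a fixed player $i$, let $x^\lambda=\Pr_{\sigma^\lambda}(\sum_{j\ne i}a_j\ge B-1\mid\omega=H)$ and $y^\lambda=\Pr_{\sigma^\lambda}(\sum_{j\ne i}a_j\ge B-1\mid\omega=L)$. If $(1-p)x^{\lambda'}-py^{\lambda'}=0$ for some $\lambda'\in(0,1)$, then $(1-p)x^{\lambda}-py^{\lambda}>0$ for all $\lambda\in[0,\lambda')$ and $(1-p)x^{\lambda}-py^{\lambda}<0$ for all $\lambda\in(\lambda',1]$.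
   Context: The crowdfunding game $\Gamma(B,n)$ with parameter $p\in(\tfrac12,1)$: there are $n$ players and a threshold $B\in\{1,\dots,n\}$. A state $\omega\in\{H,L\}$ is drawn with probability $\tfrac12$ each. Conditional on $\omega$, each player $i$ independently receives a signal $s_i\in\{H,L\}$ with $\Pr(s_i=\omega\mid\omega)=p$. Players simultaneously choose $a_i\in\{0,1\}$. Under a profile where each player independently plays $1$ with the stated signal-dependent probabilities, conditional on $\omega$ the other players' actions are i.i.d.; in particular under $\sigma^\lambda$, conditional on $\omega=H$ each other player plays $1$ with probability $p+(1-p)\lambda$, and conditional on $\omega=L$ with probability $(1-p)+p\lambda$. *)

theory Defs
  imports Complex_Main
begin

definition binom_tail :: "nat \<Rightarrow> nat \<Rightarrow> real \<Rightarrow> real" where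
  "binom_tail m k q = (\<Sum>j\<in>{k..m}. real (m choose j) * q ^ j * (1 - q) ^ (m - j))"

text \<open>Under sigma^lambda, conditional on omega = H each of the n-1 other players
  plays 1 independently with probability p + (1-p) lambda; conditional on omega = L
  with probability (1-p) + p lambda. x^lambda, y^lambda are the probabilities that
  at least B-1 of the others play 1.\<close>
definition x_lam :: "real \<Rightarrow> nat \<Rightarrow> nat \<Rightarrow> real \<Rightarrow> real" where
  "x_lam p n B lam = binom_tail (n - 1) (B - 1) (p + (1 - p) * lam)"

definition y_lam :: "real \<Rightarrow> nat \<Rightarrow> nat \<Rightarrow> real \<Rightarrow> real" where
  "y_lam p n B lam = binom_tail (n - 1) (B - 1) ((1 - p) + p * lam)"

end

theory Submission
  imports Defs
begin

lemma bt_deriv: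
  assumes "1 \<le> k" "k \<le> m"
  shows "((\<lambda>q. binom_tail m k q) has_real_derivative
           (real m * real (m - 1 choose (k - 1)) * q ^ (k - 1) * (1 - q) ^ (m - k))) (at q)"
  using assms(2,1)
proof (induction k rule: inc_induct)
  case base
  have e: "binom_tail m m = (\<lambda>q. q ^ m)" by (auto simp: binom_tail_def fun_eq_iff)
  show ?case unfolding e
    apply (rule derivative_eq_intros refl)+
    by simp
next
  case (step j)
  have e: "binom_tail m j = (\<lambda>q. real (m choose j) * q ^ j * (1 - q) ^ (m - j) + binom_tail m (Suc j) q)"
    using step by (auto simp: binom_tail_def fun_eq_iff sum.atLeast_Suc_atMost)
  obtain j' where j': "j = Suc j'" using step by (cases j) auto
  obtain r where r: "m - j = Suc r" using step by (cases "m - j") auto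
  have m: "m = Suc (j' + Suc r)" using j' r step by simp
  have c1: "real (m choose j) * real j = real m * real (m - 1 choose (j - 1))"
  proof -
    have "j * (m choose j) = m * ((m - 1) choose (j - 1))"
      using times_binomial_minus1_eq[of j m] step by simp
    then have "real j * real (m choose j) = real m * real ((m - 1) choose (j - 1))"
      by (metis of_nat_mult)
    then show ?thesis by (simp add: mult.commute)
  qed
  have c2: "real (m choose j) * real (m - j) = real m * real (m - 1 choose j)"
  proof -
    have "(m choose j) * (m - j) = m * (m - 1 choose j)"
      using m j' binomial_absorb_comp[of m j] by (simp add: mult.commute)
    then show ?thesis by (metis of_nat_mult)
  qed
  have IH: "((\<lambda>q. binom_tail m (Suc j) q) has_real_derivative
           (real m * real (m - 1 choose j) * q ^ j * (1 - q) ^ r)) (at q)"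
    proof -
    have "m - Suc j = r" using r by linarith
    then show ?thesis using step.IH by simp
  qed
  have T: "((\<lambda>q. real (m choose j) * q ^ j * (1 - q) ^ (m - j)) has_real_derivative
      (real (m choose j) * real j) * (q ^ j' * (1 - q) ^ (m - j))
      - (real (m choose j) * real (m - j)) * (q ^ j * (1 - q) ^ r)) (at q)"
    unfolding r j'
    apply (rule derivative_eq_intros refl)+
    using r j' by (simp add: algebra_simps)
  have "((\<lambda>q. real (m choose j) * q ^ j * (1 - q) ^ (m - j) + binom_tail m (Suc j) q) has_real_derivative
      (real (m choose j) * real j) * (q ^ j' * (1 - q) ^ (m - j))
      - (real (m choose j) * real (m - j)) * (q ^ j * (1 - q) ^ r)
      + real m * real (m - 1 choose j) * q ^ j * (1 - q) ^ r) (at q)"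
    by (rule DERIV_add[OF T IH])
  then show ?case unfolding e c1 c2 using j' r by (simp add: algebra_simps)
qed

lemma term_ineq:
  fixes a b X Y t c C :: real
  assumes "0 < a" "0 < b" "0 < X" "0 < Y" "0 < t" "0 < c" "0 < C" "a * Y < b * X"
  shows "a * c * X ^ k' * (a * t) ^ (d + e) * (C * Y ^ (Suc k' + d) * (b * t) ^ e)
       < b * c * Y ^ k' * (b * t) ^ (d + e) * (C * X ^ (Suc k' + d) * (a * t) ^ e)"
proof -
  define P where "P = c * C * X ^ k' * Y ^ k' * (a * t) ^ e * (b * t) ^ e * t ^ d"
  have P: "P > 0" unfolding P_def using assms by simp
  have L: "a * c * X ^ k' * (a * t) ^ (d + e) * (C * Y ^ (Suc k' + d) * (b * t) ^ e) = P * (a * Y) ^ Suc d"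
    unfolding P_def by (simp add: power_add power_mult_distrib algebra_simps)
  have R: "b * c * Y ^ k' * (b * t) ^ (d + e) * (C * X ^ (Suc k' + d) * (a * t) ^ e) = P * (b * X) ^ Suc d"
    unfolding P_def by (simp add: power_add power_mult_distrib algebra_simps)
  have "(a * Y) ^ Suc d < (b * X) ^ Suc d"
    using assms by (intro power_strict_mono) auto
  then show ?thesis unfolding L R using P by simp
qed


lemma key:
  fixes p lam :: real and k m :: nat
  assumes "1/2 < p" "p < 1" "0 \<le> lam" "lam < 1" "1 \<le> k" "k \<le> m"
  shows "(1 - p) * (real m * real (m - 1 choose (k - 1)) * (p + (1 - p) * lam) ^ (k - 1) * (1 - (p + (1 - p) * lam)) ^ (m - k))
           * binom_tail m k (1 - p + p * lam)
       < p * (real m * real (m - 1 choose (k - 1)) * (1 - p + p * lam) ^ (k - 1) * (1 - (1 - p + p * lam)) ^ (m - k))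
           * binom_tail m k (p + (1 - p) * lam)"
proof -
  define X where "X = p + (1 - p) * lam"
  define Y where "Y = 1 - p + p * lam"
  define t where "t = 1 - lam"
  define c where "c = real m * real (m - 1 choose (k - 1))"
  have X1: "1 - X = (1 - p) * t" unfolding X_def t_def by (simp add: algebra_simps)
  have Y1: "1 - Y = p * t" unfolding Y_def t_def by (simp add: algebra_simps)
  have Xp: "X > 0" unfolding X_def using assms by (simp add: add_pos_nonneg)
  have Yp: "Y > 0" unfolding Y_def using assms by (simp add: add_pos_nonneg)
  have tp: "t > 0" unfolding t_def using assms by simp
  have cp: "c > 0" unfolding c_def using assms by simp
  have aY: "(1 - p) * Y < p * X"
  proof -
    have "p * X - (1 - p) * Y = (2 * p - 1) * (1 :: real)"
      unfolding X_def Y_def by (simp add: algebra_simps power2_eq_square)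
    then show ?thesis using assms by simp
  qed
  let ?f = "\<lambda>j. (1 - p) * c * X ^ (k - 1) * ((1 - p) * t) ^ (m - k) * (real (m choose j) * Y ^ j * (p * t) ^ (m - j))"
  let ?g = "\<lambda>j. p * c * Y ^ (k - 1) * (p * t) ^ (m - k) * (real (m choose j) * X ^ j * ((1 - p) * t) ^ (m - j))"
  have "sum ?f {k..m} < sum ?g {k..m}"
  proof (rule sum_strict_mono)
    show "finite {k..m}" by simp
    show "{k..m} \<noteq> {}" using assms by simp
    fix j assume j: "j \<in> {k..m}"
    obtain k' where k': "k = Suc k'" using assms by (cases k) auto
    obtain d where d: "j = k + d" using j le_Suc_ex by auto
    obtain e where e: "m = j + e" using j le_Suc_ex by auto
    have mk: "m - k = d + e" "m - j = e" "k - 1 = k'" "j = Suc k' + d" using k' d e by auto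
    have Cp: "real (m choose j) > 0" using j by simp
    have T: "(1 - p) * c * X ^ k' * ((1 - p) * t) ^ (d + e) * (real (m choose j) * Y ^ (Suc k' + d) * (p * t) ^ e)
       < p * c * Y ^ k' * (p * t) ^ (d + e) * (real (m choose j) * X ^ (Suc k' + d) * ((1 - p) * t) ^ e)"
      by (rule term_ineq) (use assms Xp Yp tp cp Cp aY in auto)
    show "?f j < ?g j" unfolding mk(1-3) using T[folded mk(4)] .
  qed
  then show ?thesis
    unfolding binom_tail_def X_def[symmetric] Y_def[symmetric] c_def[symmetric] X1 Y1 sum_distrib_left
    by (simp add: mult.assoc)
qed


lemma bt_zero: "binom_tail m 0 q = 1"
proof -
  have "binom_tail m 0 q = (\<Sum>j\<le>m. real (m choose j) * q ^ j * (1 - q) ^ (m - j))"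
    unfolding binom_tail_def by (simp add: atMost_atLeast0)
  also have "\<dots> = (q + (1 - q)) ^ m" by (rule binomial_ring[symmetric])
  finally show ?thesis by simp
qed

lemma bt_one: assumes "k \<le> m" shows "binom_tail m k 1 = 1"
proof -
  have "binom_tail m k 1 = (\<Sum>j\<in>{k..m}. if j = m then 1 else 0)"
    unfolding binom_tail_def by (intro sum.cong) auto
  also have "\<dots> = 1" using assms by simp
  finally show ?thesis .
qed

lemma bt_pos: assumes "k \<le> m" "0 < q" "q \<le> 1" shows "binom_tail m k q > 0"
  unfolding binom_tail_def
  by (rule sum_pos2[of _ m]) (use assms in auto)

lemma ratio_decr:
  fixes p a b :: real and k m :: nat
  assumes "1/2 < p" "p < 1" "0 \<le> a" "a < b" "b < 1" "1 \<le> k" "k \<le> m"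
  shows "binom_tail m k (p + (1 - p) * b) / binom_tail m k (1 - p + p * b)
       < binom_tail m k (p + (1 - p) * a) / binom_tail m k (1 - p + p * a)"
proof (rule DERIV_neg_imp_decreasing[OF assms(4)])
  fix x assume x: "a \<le> x" "x \<le> b"
  let ?Gd = "\<lambda>q. real m * real (m - 1 choose (k - 1)) * q ^ (k - 1) * (1 - q) ^ (m - k)"
  let ?G = "binom_tail m k"
  have d1: "DERIV (\<lambda>x. ?G (p + (1 - p) * x)) x :> ?Gd (p + (1 - p) * x) * (1 - p)"
    by (rule DERIV_chain2[OF bt_deriv[OF assms(6,7)]]) (auto intro!: derivative_eq_intros)
  have d2: "DERIV (\<lambda>x. ?G (1 - p + p * x)) x :> ?Gd (1 - p + p * x) * p"
    by (rule DERIV_chain2[OF bt_deriv[OF assms(6,7)]]) (auto intro!: derivative_eq_intros)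
  have yp: "?G (1 - p + p * x) > 0"
    by (rule bt_pos) (use assms x in \<open>auto simp: add_pos_nonneg mult_le_one\<close>)
  have K: "(1 - p) * ?Gd (p + (1 - p) * x) * ?G (1 - p + p * x) < p * ?Gd (1 - p + p * x) * ?G (p + (1 - p) * x)"
    by (rule key) (use assms x in auto)
  have "DERIV (\<lambda>x. ?G (p + (1 - p) * x) / ?G (1 - p + p * x)) x :>
     (?Gd (p + (1 - p) * x) * (1 - p) * ?G (1 - p + p * x) - ?G (p + (1 - p) * x) * (?Gd (1 - p + p * x) * p))
       / (?G (1 - p + p * x) * ?G (1 - p + p * x))"
    by (rule DERIV_divide[OF d1 d2]) (use yp in simp)
  moreover have "(?Gd (p + (1 - p) * x) * (1 - p) * ?G (1 - p + p * x) - ?G (p + (1 - p) * x) * (?Gd (1 - p + p * x) * p))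
       / (?G (1 - p + p * x) * ?G (1 - p + p * x)) < 0"
    using K yp by (intro divide_neg_pos) (auto simp: algebra_simps)
  ultimately show "\<exists>y. DERIV (\<lambda>x. ?G (p + (1 - p) * x) / ?G (1 - p + p * x)) x :> y \<and> y < 0" by blast
qed

theorem proposition1:
  fixes p :: real and n B :: nat and lam' :: real
  assumes "1/2 < p" "p < 1" "n \<ge> 1" "1 \<le> B" "B \<le> n"
    and "0 < lam'" "lam' < 1"
    and "(1 - p) * x_lam p n B lam' - p * y_lam p n B lam' = 0"
  shows "(\<forall>lam\<in>{0..<lam'}. (1 - p) * x_lam p n B lam - p * y_lam p n B lam > 0)
       \<and> (\<forall>lam\<in>{lam'<..1}. (1 - p) * x_lam p n B lam - p * y_lam p n B lam < 0)"
proof -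
  define m where "m = n - 1"
  define k where "k = B - 1"
  have km: "k \<le> m" unfolding m_def k_def using assms by simp
  have k1: "1 \<le> k"
  proof (rule ccontr)
    assume "\<not> 1 \<le> k"
    then have "k = 0" by simp
    then have "(1 - p) * x_lam p n B lam' - p * y_lam p n B lam' = 1 - 2 * p"
      unfolding x_lam_def y_lam_def m_def[symmetric] k_def[symmetric] by (simp add: bt_zero)
    then show False using assms by simp
  qed
  define R where "R = (\<lambda>l. binom_tail m k (p + (1 - p) * l) / binom_tail m k (1 - p + p * l))"
  have ypos: "binom_tail m k (1 - p + p * l) > 0" if "0 \<le> l" "l \<le> 1" for l
    by (rule bt_pos) (use assms that km in \<open>auto simp: add_pos_nonneg mult_le_one\<close>)
  have fR: "(1 - p) * x_lam p n B l - p * y_lam p n B l = binom_tail m k (1 - p + p * l) * ((1 - p) * R l - p)"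
    if "0 \<le> l" "l \<le> 1" for l
    using ypos[OF that] unfolding R_def x_lam_def y_lam_def m_def[symmetric] k_def[symmetric]
    by (simp add: field_simps)
  have Rl': "(1 - p) * R lam' = p"
    using fR[of lam'] assms ypos[of lam'] by simp
  have "(1 - p) * x_lam p n B l - p * y_lam p n B l > 0" if l: "l \<in> {0..<lam'}" for l
  proof -
    have "R lam' < R l" unfolding R_def
      by (rule ratio_decr) (use assms l k1 km in auto)
    then have "(1 - p) * R lam' < (1 - p) * R l" using assms by (intro mult_strict_left_mono) auto
    then have "(1 - p) * R l - p > 0" using Rl' by simp
    then show ?thesis using fR[of l] ypos[of l] l assms by simp
  qed
  moreover have "(1 - p) * x_lam p n B l - p * y_lam p n B l < 0" if l: "l \<in> {lam'<..1}" for l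
  proof (cases "l = 1")
    case True
    then show ?thesis unfolding x_lam_def y_lam_def m_def[symmetric] k_def[symmetric]
      using bt_one[OF km] assms by simp
  next
    case False
    have "R l < R lam'" unfolding R_def
      by (rule ratio_decr) (use assms l k1 km False in auto)
    then have "(1 - p) * R l < (1 - p) * R lam'" using assms by (intro mult_strict_left_mono) auto
    then have "(1 - p) * R l - p < 0" using Rl' by simp
    then show ?thesis using fR[of l] ypos[of l] l assms by (simp add: mult_pos_neg)
  qed
  ultimately show ?thesis by blast
qed

end
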